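(* Let $n\geqslant 2$. The set $\{x_1,x_2,\ldots,x_n\}$ generates the monoid $\mathcal{AO}_n$.
   Context: Let $\Omega_n=\{1<2<\cdots<n\}$ and $\mathcal{I}_n$ the monoid of all partial injective maps of $\Omega_n$, composed left to right. $\mathcal{AI}_n$ is the set of all $\alpha\in\mathcal{I}_n$ with $\alpha=\sigma|_{\mathrm{Dom}(\alpha)}$ for some even permutation $\sigma$; $\mathcal{POI}_n$ is the set of order-preserving elements and $\mathcal{AO}_n=\mathcal{AI}_n\cap\mathcal{POI}_n$. Let $X_i=\Omega_n\setminus\{i\}$. For subsets $A,B$ with $|A|=|B|$ there is a unique order-preserving partial permutation with domain $A$ and image $B$. Define $x_1,\dots,x_n$ as the order-preserving partial permutations with: $x_1$: domain $X_1$, image $X_n$ if $n$ is odd and image $X_{n-1}$ if $n$ is even; $x_2$: domain $X_2$, image $X_{n-1}$ if $n$ is odd and image $X_n$ if $n$ is even; $x_i$ ($3\leqslant i\leqslant n$): domain $X_i$, image $X_{i-2}$. *)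

theory Defs
  imports "HOL-Combinatorics.Permutations"
begin

text \<open>Partial maps of \<Omega>_n = {1..n} are represented as nat \<Rightarrow> nat option.\<close>

definition PI :: "nat \<Rightarrow> (nat \<Rightarrow> nat option) set" where
  "PI n = {\<alpha>. dom \<alpha> \<subseteq> {1..n} \<and> ran \<alpha> \<subseteq> {1..n} \<and> inj_on \<alpha> (dom \<alpha>)}"

text \<open>Composition left to right: first \<alpha>, then \<beta>.\<close>
definition pcomp :: "(nat \<Rightarrow> nat option) \<Rightarrow> (nat \<Rightarrow> nat option) \<Rightarrow> (nat \<Rightarrow> nat option)" where
  "pcomp \<alpha> \<beta> = \<beta> \<circ>\<^sub>m \<alpha>"

definition pid :: "nat \<Rightarrow> (nat \<Rightarrow> nat option)" where
  "pid n = (\<lambda>x. if x \<in> {1..n} then Some x else None)"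

definition AI :: "nat \<Rightarrow> (nat \<Rightarrow> nat option) set" where
  "AI n = {\<alpha> \<in> PI n. \<exists>\<sigma>. \<sigma> permutes {1..n} \<and> evenperm \<sigma> \<and>
                         (\<forall>x\<in>dom \<alpha>. \<alpha> x = Some (\<sigma> x))}"

definition POI :: "nat \<Rightarrow> (nat \<Rightarrow> nat option) set" where
  "POI n = {\<alpha> \<in> PI n. \<forall>x\<in>dom \<alpha>. \<forall>y\<in>dom \<alpha>. x \<le> y \<longrightarrow> the (\<alpha> x) \<le> the (\<alpha> y)}"

definition AO :: "nat \<Rightarrow> (nat \<Rightarrow> nat option) set" where
  "AO n = AI n \<inter> POI n"

text \<open>The order-preserving partial permutation with domain A and image B (|A| = |B|).\<close>
definition opp :: "nat set \<Rightarrow> nat set \<Rightarrow> (nat \<Rightarrow> nat option)" where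
  "opp A B = map_of (zip (sorted_list_of_set A) (sorted_list_of_set B))"

definition Xs :: "nat \<Rightarrow> nat \<Rightarrow> nat set" where
  "Xs n i = {1..n} - {i}"

definition xgen :: "nat \<Rightarrow> nat \<Rightarrow> (nat \<Rightarrow> nat option)" where
  "xgen n i =
     (if i = 1 then opp (Xs n 1) (if odd n then Xs n n else Xs n (n - 1))
      else if i = 2 then opp (Xs n 2) (if odd n then Xs n (n - 1) else Xs n n)
      else opp (Xs n i) (Xs n (i - 2)))"

inductive_set generated :: "nat \<Rightarrow> (nat \<Rightarrow> nat option) set \<Rightarrow> (nat \<Rightarrow> nat option) set"
  for n G where
  gen_id: "pid n \<in> generated n G"
| gen_step: "\<alpha> \<in> generated n G \<Longrightarrow> g \<in> G \<Longrightarrow> pcomp \<alpha> g \<in> generated n G"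

end

theory Submission
  imports Defs
begin


definition sf :: "nat \<Rightarrow> nat \<Rightarrow> nat \<Rightarrow> nat" where
  "sf i j k = (if i < k \<and> k \<le> j then k - 1 else if j \<le> k \<and> k < i then k + 1 else k)"

definition shm :: "nat \<Rightarrow> nat \<Rightarrow> nat \<Rightarrow> nat \<Rightarrow> nat option" where
  "shm n i j = (\<lambda>k. if k \<in> {1..n} \<and> k \<noteq> i then Some (sf i j k) else None)"

definition ext :: "nat \<Rightarrow> nat \<Rightarrow> nat \<Rightarrow> nat" where
  "ext i j = (\<lambda>k. if k = i then j else sf i j k)"

definition idA :: "nat set \<Rightarrow> nat \<Rightarrow> nat option" where
  "idA A = (\<lambda>x. if x \<in> A then Some x else None)"

lemma sorted_image_mono:
  assumes "finite A" "strict_mono_on A f"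
  shows "sorted_list_of_set (f ` A) = map f (sorted_list_of_set A)"
proof -
  have "sorted_wrt (<) (map f (sorted_list_of_set A))"
  proof -
    have "sorted_wrt (<) (sorted_list_of_set A)" by simp
    then show ?thesis unfolding sorted_wrt_map
      by (rule sorted_wrt_mono_rel[rotated]) (use assms in \<open>auto simp: strict_mono_on_def\<close>)
  qed
  moreover have "set (map f (sorted_list_of_set A)) = f ` A" using assms(1) by simp
  ultimately show ?thesis
    using sorted_list_of_set_unique[of "f ` A" "map f (sorted_list_of_set A)"] assms(1)
    by (metis finite_imageI sorted_list_of_set.finite_set_strict_sorted strict_sorted_equal)
qed

lemma opp_eq:
  assumes "finite A" "dom \<beta> = A" "ran \<beta> = B"
    and mono: "\<And>x y. x \<in> A \<Longrightarrow> y \<in> A \<Longrightarrow> x < y \<Longrightarrow> the (\<beta> x) < the (\<beta> y)"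
  shows "opp A B = \<beta>"
proof -
  define f where "f = (\<lambda>x. the (\<beta> x))"
  have sm: "strict_mono_on A f" using mono unfolding strict_mono_on_def f_def by blast
  have B: "B = f ` A"
    using assms(2,3) unfolding f_def ran_def dom_def by force
  show ?thesis
    unfolding opp_def B sorted_image_mono[OF assms(1) sm] map_of_zip_map
    using assms(1,2) unfolding f_def dom_def by (auto simp: fun_eq_iff)
qed

lemma POI_strict:
  assumes "\<alpha> \<in> POI n" "x \<in> dom \<alpha>" "y \<in> dom \<alpha>" "x < y"
  shows "the (\<alpha> x) < the (\<alpha> y)"
proof -
  have "the (\<alpha> x) \<le> the (\<alpha> y)" using assms unfolding POI_def by auto
  moreover have "\<alpha> x \<noteq> \<alpha> y"
  proof
    assume "\<alpha> x = \<alpha> y"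
    then have "x = y" using assms unfolding POI_def PI_def inj_on_def by blast
    then show False using assms(4) by simp
  qed
  ultimately show ?thesis using assms(2,3) by (auto simp: dom_def)
qed

lemma PI_finite: "\<alpha> \<in> PI n \<Longrightarrow> finite (dom \<alpha>)"
  unfolding PI_def using finite_subset[of "dom \<alpha>" "{1..n}"] by auto

lemma POI_unique:
  assumes "\<alpha> \<in> POI n" "\<beta> \<in> POI n" "dom \<alpha> = dom \<beta>" "ran \<alpha> = ran \<beta>"
  shows "\<alpha> = \<beta>"
proof -
  have f: "finite (dom \<alpha>)" using assms(1) PI_finite unfolding POI_def by auto
  have "opp (dom \<alpha>) (ran \<alpha>) = \<alpha>" by (rule opp_eq[OF f refl refl]) (rule POI_strict[OF assms(1)])
  moreover have "opp (dom \<alpha>) (ran \<alpha>) = \<beta>" unfolding assms(3,4)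
    by (rule opp_eq[OF f[unfolded assms(3)] refl refl]) (rule POI_strict[OF assms(2)])
  ultimately show ?thesis by simp
qed



lemma sf_inj: "k \<noteq> i \<Longrightarrow> k' \<noteq> i \<Longrightarrow> sf i j k = sf i j k' \<Longrightarrow> k = k'"
  unfolding sf_def by (auto split: if_splits)

lemma sf_ne_j: "k \<noteq> i \<Longrightarrow> sf i j k \<noteq> j"
  unfolding sf_def by (auto split: if_splits)

lemma sf_range: "1 \<le> i \<Longrightarrow> i \<le> n \<Longrightarrow> 1 \<le> j \<Longrightarrow> j \<le> n \<Longrightarrow> 1 \<le> k \<Longrightarrow> k \<le> n \<Longrightarrow>
   1 \<le> sf i j k \<and> sf i j k \<le> n"
  unfolding sf_def by (auto split: if_splits)

lemma sf_mono: "k < k' \<Longrightarrow> k \<noteq> i \<Longrightarrow> k' \<noteq> i \<Longrightarrow> sf i j k < sf i j k'"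
  unfolding sf_def by (auto split: if_splits)

lemma sf_back: "k \<noteq> i \<Longrightarrow> sf j i (sf i j k) = k"
  unfolding sf_def by (auto split: if_splits)

lemma sf_comp: "k \<noteq> i \<Longrightarrow> sf j l (sf i j k) = sf i l k"
  unfolding sf_def by (auto split: if_splits)

lemma sf_le: "i < j \<Longrightarrow> sf i j k \<le> k"
  unfolding sf_def by auto

lemma sf_lt: "i < k \<Longrightarrow> k \<le> j \<Longrightarrow> sf i j k < k"
  unfolding sf_def by auto

lemma sf_same: "sf i i k = k"
  unfolding sf_def by auto

lemma ext_comp: "ext j l \<circ> ext i j = ext i l"
  unfolding ext_def by (auto simp: fun_eq_iff sf_comp sf_ne_j)

lemma ext_same: "ext i i = id"
  unfolding ext_def by (auto simp: fun_eq_iff sf_same)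

lemma ext_Suc: "ext i (Suc i) = Transposition.transpose i (Suc i)"
  unfolding ext_def sf_def by (auto simp: fun_eq_iff Transposition.transpose_def)

lemma ext_Suc': "ext (Suc i) i = Transposition.transpose i (Suc i)"
  unfolding ext_def sf_def by (auto simp: fun_eq_iff Transposition.transpose_def)

lemma ext_up: "permutation (ext i (i + m)) \<and> (evenperm (ext i (i + m)) \<longleftrightarrow> even m)"
proof (induction m)
  case 0
  then show ?case by (simp add: ext_same)
next
  case (Suc m)
  have e: "ext i (i + Suc m) = ext (i + m) (Suc (i + m)) \<circ> ext i (i + m)"
    by (simp add: ext_comp)
  have p1: "permutation (Transposition.transpose (i + m) (Suc (i + m)))" by (rule permutation_swap_id)
  have p2: "permutation (ext i (i + m))" using Suc by blast
  show ?case unfolding e ext_Suc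
    by (intro conjI permutation_compose[OF p1 p2], subst evenperm_comp[OF p1 p2])
      (use Suc in \<open>simp add: evenperm_swap\<close>)
qed

lemma ext_down: "permutation (ext (i + m) i) \<and> (evenperm (ext (i + m) i) \<longleftrightarrow> even m)"
proof (induction m arbitrary: i)
  case 0
  then show ?case by (simp add: ext_same)
next
  case (Suc m)
  have e: "ext (i + Suc m) i = ext (Suc i) i \<circ> ext (Suc i + m) (Suc i)"
    by (simp add: ext_comp)
  have p1: "permutation (Transposition.transpose i (Suc i))" by (rule permutation_swap_id)
  have p2: "permutation (ext (Suc i + m) (Suc i))" using Suc by blast
  show ?case unfolding e ext_Suc'
    by (intro conjI permutation_compose[OF p1 p2], subst evenperm_comp[OF p1 p2])
      (use Suc[of "Suc i"] in \<open>simp add: evenperm_swap\<close>)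
qed

lemma ext_perm: "permutation (ext i j) \<and> (evenperm (ext i j) \<longleftrightarrow> even (i + j))"
proof (cases "i \<le> j")
  case True
  then obtain m where "j = i + m" using le_Suc_ex by blast
  moreover have "even (i + (i + m)) = even m" by presburger
  ultimately show ?thesis using ext_up[of i m] by simp
next
  case False
  then obtain m where "i = j + m" using le_Suc_ex[of j i] by auto
  moreover have "even (j + m + j) = even m" by presburger
  ultimately show ?thesis using ext_down[of j m] by simp
qed

lemma ext_permutes:
  assumes "i \<in> {1..n}" "j \<in> {1..n}"
  shows "ext i j permutes {1..n}"
proof -
  have "bij (ext i j)" using ext_perm permutation_bijective by blast
  moreover have "\<forall>x. x \<notin> {1..n} \<longrightarrow> ext i j x = x"
    using assms unfolding ext_def sf_def by auto
  ultimately show ?thesis unfolding permutes_def bij_def inj_def surj_def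
    by (metis)
qed

lemma dom_shm: "dom (shm n i j) = Xs n i"
  unfolding shm_def Xs_def dom_def by auto

lemma ran_shm:
  assumes "i \<in> {1..n}" "j \<in> {1..n}"
  shows "ran (shm n i j) = Xs n j"
proof
  show "ran (shm n i j) \<subseteq> Xs n j"
  proof
    fix y assume "y \<in> ran (shm n i j)"
    then obtain x where x: "shm n i j x = Some y" unfolding ran_def by auto
    then have x1: "x \<in> {1..n}" "x \<noteq> i" and y: "y = sf i j x" unfolding shm_def by (auto split: if_splits)
    show "y \<in> Xs n j" unfolding Xs_def y using sf_range[of i n j x] sf_ne_j[OF x1(2), of j] assms x1 by auto
  qed
next
  show "Xs n j \<subseteq> ran (shm n i j)"
  proof
    fix y assume y: "y \<in> Xs n j"
    have "sf j i y \<noteq> i" using y sf_ne_j[of y j i] unfolding Xs_def by auto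
    moreover have "sf j i y \<in> {1..n}" using y assms sf_range[of j n i y] unfolding Xs_def by auto
    moreover have "sf i j (sf j i y) = y" using y sf_back[of y j i] unfolding Xs_def by auto
    ultimately show "y \<in> ran (shm n i j)" unfolding ran_def shm_def by (auto intro!: exI[of _ "sf j i y"])
  qed
qed

lemma shm_POI:
  assumes "i \<in> {1..n}" "j \<in> {1..n}"
  shows "shm n i j \<in> POI n"
  unfolding POI_def PI_def
proof (intro CollectI conjI ballI impI)
  show "dom (shm n i j) \<subseteq> {1..n}" unfolding dom_shm Xs_def by auto
  show "ran (shm n i j) \<subseteq> {1..n}" unfolding ran_shm[OF assms] Xs_def by auto
  show "inj_on (shm n i j) (dom (shm n i j))" unfolding dom_shm Xs_def inj_on_def shm_def
    using sf_inj by auto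
  fix x y assume "x \<in> dom (shm n i j)" "y \<in> dom (shm n i j)" "x \<le> y"
  then show "the (shm n i j x) \<le> the (shm n i j y)"
    unfolding dom_shm Xs_def shm_def using sf_mono[of x y i j]
    by (cases "x = y") auto
qed

lemma shm_AI:
  assumes "i \<in> {1..n}" "j \<in> {1..n}" "even (i + j)"
  shows "shm n i j \<in> AI n"
  unfolding AI_def
proof (intro CollectI conjI exI[of _ "ext i j"])
  show "shm n i j \<in> PI n" using shm_POI[OF assms(1,2)] unfolding POI_def by auto
  show "ext i j permutes {1..n}" by (rule ext_permutes[OF assms(1,2)])
  show "evenperm (ext i j)" using ext_perm assms(3) by blast
  show "\<forall>x\<in>dom (shm n i j). shm n i j x = Some (ext i j x)"
  proof
    fix x assume "x \<in> dom (shm n i j)"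
    hence "x \<in> {1..n}" "x \<noteq> i" unfolding dom_shm Xs_def by auto
    thus "shm n i j x = Some (ext i j x)" unfolding shm_def ext_def by auto
  qed
qed

lemma shm_AO:
  assumes "i \<in> {1..n}" "j \<in> {1..n}" "even (i + j)"
  shows "shm n i j \<in> AO n"
  using shm_AI[OF assms] shm_POI[OF assms(1,2)] unfolding AO_def by auto

lemma pcomp_shm:
  assumes "i \<in> {1..n}" "j \<in> {1..n}" "l \<in> {1..n}"
  shows "pcomp (shm n i j) (shm n j l) = shm n i l"
  unfolding pcomp_def shm_def map_comp_def fun_eq_iff
  using assms sf_range[of i n j] sf_ne_j[of _ i j] sf_comp[of _ i j l]
  by auto



lemma pid_AO: "pid n \<in> AO n"
  unfolding AO_def AI_def POI_def PI_def pid_def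
  by (auto simp: dom_def ran_def inj_on_def permutes_id split: if_splits intro!: exI[of _ id])

lemma PI_comp:
  assumes "\<alpha> \<in> PI n" "\<beta> \<in> PI n"
  shows "pcomp \<alpha> \<beta> \<in> PI n"
  unfolding PI_def
proof (intro CollectI conjI)
  show "dom (pcomp \<alpha> \<beta>) \<subseteq> {1..n}" using assms unfolding PI_def pcomp_def map_comp_def dom_def
    by (auto split: option.splits)
  have "ran (pcomp \<alpha> \<beta>) \<subseteq> ran \<beta>" unfolding pcomp_def map_comp_def ran_def
    by (auto split: option.splits)
  then show "ran (pcomp \<alpha> \<beta>) \<subseteq> {1..n}" using assms unfolding PI_def by blast
  show "inj_on (pcomp \<alpha> \<beta>) (dom (pcomp \<alpha> \<beta>))"
  proof (rule inj_onI)
    fix x y assume x: "x \<in> dom (pcomp \<alpha> \<beta>)" and y: "y \<in> dom (pcomp \<alpha> \<beta>)" and e: "pcomp \<alpha> \<beta> x = pcomp \<alpha> \<beta> y"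
    obtain a where a: "\<alpha> x = Some a" using x unfolding pcomp_def map_comp_def dom_def by (auto split: option.splits)
    obtain b where b: "\<alpha> y = Some b" using y unfolding pcomp_def map_comp_def dom_def by (auto split: option.splits)
    have "a \<in> dom \<beta>" "b \<in> dom \<beta>" using x y a b unfolding pcomp_def map_comp_def dom_def by auto
    moreover have "\<beta> a = \<beta> b" using e a b unfolding pcomp_def map_comp_def by auto
    ultimately have "a = b" using assms(2) unfolding PI_def inj_on_def by blast
    then have "\<alpha> x = \<alpha> y" using a b by simp
    moreover have "x \<in> dom \<alpha>" "y \<in> dom \<alpha>" using a b by auto
    ultimately show "x = y" using assms(1) unfolding PI_def inj_on_def by blast
  qed
qed

lemma AO_comp:
  assumes "\<alpha> \<in> AO n" "\<beta> \<in> AO n"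
  shows "pcomp \<alpha> \<beta> \<in> AO n"
proof -
  have PI: "pcomp \<alpha> \<beta> \<in> PI n" using assms PI_comp unfolding AO_def AI_def by auto
  have POI: "pcomp \<alpha> \<beta> \<in> POI n"
    unfolding POI_def
  proof (intro CollectI conjI PI ballI impI)
    fix x y assume x: "x \<in> dom (pcomp \<alpha> \<beta>)" and y: "y \<in> dom (pcomp \<alpha> \<beta>)" and le: "x \<le> y"
    obtain a where a: "\<alpha> x = Some a" using x unfolding pcomp_def map_comp_def dom_def by (auto split: option.splits)
    obtain b where b: "\<alpha> y = Some b" using y unfolding pcomp_def map_comp_def dom_def by (auto split: option.splits)
    have ab: "a \<in> dom \<beta>" "b \<in> dom \<beta>" using x y a b unfolding pcomp_def map_comp_def dom_def by auto
    have "a \<le> b" using assms(1) le a b unfolding AO_def POI_def by force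
    then have "the (\<beta> a) \<le> the (\<beta> b)" using assms(2) ab unfolding AO_def POI_def by blast
    then show "the (pcomp \<alpha> \<beta> x) \<le> the (pcomp \<alpha> \<beta> y)" using a b unfolding pcomp_def by simp
  qed
  obtain \<sigma> where s: "\<sigma> permutes {1..n}" "evenperm \<sigma>" "\<forall>x\<in>dom \<alpha>. \<alpha> x = Some (\<sigma> x)"
    using assms(1) unfolding AO_def AI_def by auto
  obtain \<tau> where t: "\<tau> permutes {1..n}" "evenperm \<tau>" "\<forall>x\<in>dom \<beta>. \<beta> x = Some (\<tau> x)"
    using assms(2) unfolding AO_def AI_def by auto
  have "\<tau> \<circ> \<sigma> permutes {1..n}" using s t by (simp add: permutes_compose)
  moreover have "evenperm (\<tau> \<circ> \<sigma>)"
    using evenperm_comp[of \<tau> \<sigma>] s t permutation_permutes by (metis finite_atLeastAtMost)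
  moreover have "\<forall>x\<in>dom (pcomp \<alpha> \<beta>). pcomp \<alpha> \<beta> x = Some ((\<tau> \<circ> \<sigma>) x)"
  proof
    fix x assume x: "x \<in> dom (pcomp \<alpha> \<beta>)"
    obtain a where a: "\<alpha> x = Some a" using x unfolding pcomp_def map_comp_def dom_def by (auto split: option.splits)
    have "a \<in> dom \<beta>" using x a unfolding pcomp_def map_comp_def dom_def by auto
    moreover have "a = \<sigma> x" using s(3) a by (metis domI option.inject)
    ultimately show "pcomp \<alpha> \<beta> x = Some ((\<tau> \<circ> \<sigma>) x)" using t(3) a unfolding pcomp_def by simp
  qed
  ultimately have "pcomp \<alpha> \<beta> \<in> AI n" unfolding AI_def using PI by blast
  then show ?thesis using POI unfolding AO_def by simp
qed

definition tgt :: "nat \<Rightarrow> nat \<Rightarrow> nat" where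
  "tgt n i = (if i = 1 then (if odd n then n else n - 1)
              else if i = 2 then (if odd n then n - 1 else n) else i - 2)"

lemma tgt_props:
  assumes "n \<ge> 2" "i \<in> {1..n}"
  shows "tgt n i \<in> {1..n}" "even (i + tgt n i)"
  using assms unfolding tgt_def by auto

lemma xgen_eq:
  assumes "n \<ge> 2" "i \<in> {1..n}"
  shows "xgen n i = shm n i (tgt n i)"
proof -
  have "xgen n i = opp (Xs n i) (Xs n (tgt n i))"
    unfolding xgen_def tgt_def by simp
  also have "\<dots> = shm n i (tgt n i)"
  proof (rule opp_eq)
    show "finite (Xs n i)" unfolding Xs_def by simp
    show "dom (shm n i (tgt n i)) = Xs n i" by (rule dom_shm)
    show "ran (shm n i (tgt n i)) = Xs n (tgt n i)" by (rule ran_shm[OF assms(2) tgt_props(1)[OF assms]])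
    fix x y assume "x \<in> Xs n i" "y \<in> Xs n i" "x < y"
    then show "the (shm n i (tgt n i) x) < the (shm n i (tgt n i) y)"
      unfolding Xs_def shm_def using sf_mono by auto
  qed
  finally show ?thesis .
qed

lemma xgen_AO: "n \<ge> 2 \<Longrightarrow> i \<in> {1..n} \<Longrightarrow> xgen n i \<in> AO n"
  using xgen_eq shm_AO tgt_props by metis

lemma gen_AO:
  assumes "G \<subseteq> AO n"
  shows "generated n G \<subseteq> AO n"
proof
  fix \<alpha> assume "\<alpha> \<in> generated n G"
  then show "\<alpha> \<in> AO n"
    by induction (use assms pid_AO AO_comp in blast)+
qed

lemma pcomp_assoc: "pcomp (pcomp a b) c = pcomp a (pcomp b c)"
  unfolding pcomp_def map_comp_def by (auto simp: fun_eq_iff split: option.splits)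

lemma pcomp_pid_right: "\<alpha> \<in> PI n \<Longrightarrow> pcomp \<alpha> (pid n) = \<alpha>"
  unfolding pcomp_def pid_def PI_def map_comp_def fun_eq_iff
  by (auto simp: ran_def split: option.splits)

lemma pcomp_pid_left:
  assumes "\<alpha> \<in> PI n" shows "pcomp (pid n) \<alpha> = \<alpha>"
proof -
  have "\<And>x. x \<notin> {1..n} \<Longrightarrow> \<alpha> x = None" using assms unfolding PI_def by blast
  then show ?thesis unfolding pcomp_def pid_def map_comp_def fun_eq_iff
    by (metis option.simps(4) option.simps(5))
qed

lemma gen_comp:
  assumes "G \<subseteq> AO n" "\<alpha> \<in> generated n G" "\<beta> \<in> generated n G"
  shows "pcomp \<alpha> \<beta> \<in> generated n G"
  using assms(3)
proof induction
  case gen_id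
  have "\<alpha> \<in> PI n" using gen_AO[OF assms(1)] assms(2) unfolding AO_def AI_def by auto
  then show ?case using assms(2) pcomp_pid_right by simp
next
  case (gen_step \<gamma> g)
  then show ?case using pcomp_assoc[of \<alpha> \<gamma> g] generated.gen_step by metis
qed

lemma gen_G:
  assumes "G \<subseteq> AO n" "g \<in> G"
  shows "g \<in> generated n G"
proof -
  have "g \<in> PI n" using assms unfolding AO_def AI_def by auto
  then show ?thesis using generated.gen_step[OF generated.gen_id assms(2)] pcomp_pid_left by metis
qed



abbreviation GG :: "nat \<Rightarrow> (nat \<Rightarrow> nat option) set" where
  "GG n \<equiv> {xgen n i | i. i \<in> {1..n}}"

lemma GG_AO: "n \<ge> 2 \<Longrightarrow> GG n \<subseteq> AO n"
  using xgen_AO by blast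

lemma down1:
  assumes "n \<ge> 2" "1 \<le> j" "j + 2 * Suc m \<le> n"
  shows "shm n (j + 2 * Suc m) j \<in> generated n (GG n)"
  using assms(3)
proof (induction m)
  case 0
  have "tgt n (j + 2) = j" unfolding tgt_def using assms(2) by auto
  then have "xgen n (j + 2) = shm n (j + 2) j" using xgen_eq[OF assms(1), of "j+2"] 0 by auto
  moreover have "xgen n (j + 2) \<in> GG n" using 0 by auto
  ultimately show ?case using gen_G[OF GG_AO[OF assms(1)]] by simp
next
  case (Suc m)
  have a: "shm n (j + 2 * Suc m) j \<in> generated n (GG n)" using Suc by simp
  have "tgt n (j + 2 * Suc (Suc m)) = j + 2 * Suc m" unfolding tgt_def by auto
  then have "xgen n (j + 2 * Suc (Suc m)) = shm n (j + 2 * Suc (Suc m)) (j + 2 * Suc m)"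
    using xgen_eq[OF assms(1), of "j + 2 * Suc (Suc m)"] Suc.prems by auto
  moreover have "xgen n (j + 2 * Suc (Suc m)) \<in> GG n" using Suc.prems by auto
  ultimately have b: "shm n (j + 2 * Suc (Suc m)) (j + 2 * Suc m) \<in> generated n (GG n)"
    using gen_G[OF GG_AO[OF assms(1)]] by simp
  have "pcomp (shm n (j + 2 * Suc (Suc m)) (j + 2 * Suc m)) (shm n (j + 2 * Suc m) j)
        = shm n (j + 2 * Suc (Suc m)) j"
    by (rule pcomp_shm) (use Suc.prems assms(2) in auto)
  then show ?case using gen_comp[OF GG_AO[OF assms(1)] b a] by simp
qed

lemma down2:
  assumes "n \<ge> 2" "1 \<le> j" "j < i" "i \<le> n" "even (i + j)"
  shows "shm n i j \<in> generated n (GG n)"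
proof -
  have "\<exists>k. i = j + 2 * Suc k" using assms(3,5) by presburger
  then obtain k where k: "i = j + 2 * Suc k" by blast
  show ?thesis unfolding k by (rule down1) (use assms k in auto)
qed

lemma shm_gen:
  assumes "n \<ge> 2" "i \<in> {1..n}" "j \<in> {1..n}" "even (i + j)"
  shows "shm n i j \<in> generated n (GG n)"
proof -
  define b where "b = (if odd i then 1 else 2::nat)"
  define t where "t = tgt n b"
  have b: "b \<in> {1..n}" "b \<le> i" "even (i + b)"
  proof -
    have "i \<ge> 1" "i \<le> n" using assms(2) by auto
    then show "b \<in> {1..n}" "b \<le> i" "even (i + b)" unfolding b_def using assms(1)
      by (cases "odd i"; simp; presburger)+
  qed
  have t: "t \<in> {1..n}" "j \<le> t" "even (j + t)"
  proof -
    have r: "i \<ge> 1" "i \<le> n" "j \<ge> 1" "j \<le> n" using assms(2,3) by auto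
    show "t \<in> {1..n}" "j \<le> t" "even (j + t)" unfolding t_def b_def tgt_def
      using r assms(1,4) by (cases "odd i"; cases "odd n"; simp; presburger)+
  qed
  have xb: "xgen n b = shm n b t" unfolding t_def by (rule xgen_eq[OF assms(1) b(1)])
  have "xgen n b \<in> GG n" using b(1) by auto
  then have bt: "shm n b t \<in> generated n (GG n)" using xb gen_G[OF GG_AO[OF assms(1)]] by simp
  have it: "shm n i t \<in> generated n (GG n)"
  proof (cases "i = b")
    case True then show ?thesis using bt by simp
  next
    case False
    have ib: "shm n i b \<in> generated n (GG n)"
      by (rule down2[OF assms(1)]) (use b assms(2) False in auto)
    have e: "pcomp (shm n i b) (shm n b t) = shm n i t" by (rule pcomp_shm[OF assms(2) b(1) t(1)])
    have "pcomp (shm n i b) (shm n b t) \<in> generated n (GG n)"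
      by (rule gen_comp[OF GG_AO[OF assms(1)] ib bt])
    then show ?thesis unfolding e .
  qed
  show ?thesis
  proof (cases "j = t")
    case True then show ?thesis using it by simp
  next
    case False
    have tj: "shm n t j \<in> generated n (GG n)"
      by (rule down2[OF assms(1)]) (use t assms(3) False in auto)
    have e: "pcomp (shm n i t) (shm n t j) = shm n i j" by (rule pcomp_shm[OF assms(2) t(1) assms(3)])
    have "pcomp (shm n i t) (shm n t j) \<in> generated n (GG n)"
      by (rule gen_comp[OF GG_AO[OF assms(1)] it tj])
    then show ?thesis unfolding e .
  qed
qed

lemma idA_gen:
  assumes "n \<ge> 2" "A \<subseteq> {1..n}"
  shows "idA A \<in> generated n (GG n)"
proof -
  have "\<And>C. finite C \<Longrightarrow> C \<subseteq> {1..n} \<Longrightarrow> idA ({1..n} - C) \<in> generated n (GG n)"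
  proof -
    fix C :: "nat set" assume "finite C" "C \<subseteq> {1..n}"
    then show "idA ({1..n} - C) \<in> generated n (GG n)"
    proof (induction C rule: finite_induct)
      case empty
      have "idA {1..n} = pid n" unfolding idA_def pid_def by auto
      then show ?case using generated.gen_id by simp
    next
      case (insert i C)
      have i: "i \<in> {1..n}" using insert.prems by blast
      have s: "shm n i i \<in> generated n (GG n)" by (rule shm_gen[OF assms(1) i i]) simp
      have C: "idA ({1..n} - C) \<in> generated n (GG n)" using insert by blast
      have e: "pcomp (idA ({1..n} - C)) (shm n i i) = idA ({1..n} - insert i C)"
        unfolding pcomp_def idA_def shm_def map_comp_def fun_eq_iff sf_same by simp
      have "pcomp (idA ({1..n} - C)) (shm n i i) \<in> generated n (GG n)"
        by (rule gen_comp[OF GG_AO[OF assms(1)] C s])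
      then show ?case unfolding e .
    qed
  qed
  from this[of "{1..n} - A"] have "idA ({1..n} - ({1..n} - A)) \<in> generated n (GG n)" by simp
  moreover have "{1..n} - ({1..n} - A) = A" using assms(2) by blast
  ultimately show ?thesis by simp
qed



definition Rm :: "nat \<Rightarrow> nat set \<Rightarrow> nat set \<Rightarrow> bool" where
  "Rm n A A' \<longleftrightarrow> A \<subseteq> {1..n} \<and> (\<exists>i j. i \<in> {1..n} \<and> j \<in> {1..n} \<and> even (i + j) \<and> i \<notin> A \<and> A' = sf i j ` A)"

lemma Rm_sub:
  assumes "Rm n A A'"
  shows "A' \<subseteq> {1..n}"
proof -
  obtain i j where ij: "A \<subseteq> {1..n}" "i \<in> {1..n}" "j \<in> {1..n}" "i \<notin> A" "A' = sf i j ` A"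
    using assms unfolding Rm_def by blast
  show ?thesis
  proof
    fix y assume "y \<in> A'"
    then obtain x where x: "x \<in> A" "y = sf i j x" using ij by auto
    show "y \<in> {1..n}" using sf_range[of i n j x] ij x by auto
  qed
qed

lemma Rm_sym:
  assumes "Rm n A A'"
  shows "Rm n A' A"
proof -
  obtain i j where ij: "A \<subseteq> {1..n}" "i \<in> {1..n}" "j \<in> {1..n}" "even (i + j)" "i \<notin> A" "A' = sf i j ` A"
    using assms unfolding Rm_def by blast
  have "j \<notin> A'"
  proof
    assume "j \<in> A'"
    then obtain x where "x \<in> A" "j = sf i j x" using ij(6) by blast
    moreover have "x \<noteq> i" using ij(5) \<open>x \<in> A\<close> by blast
    ultimately show False using sf_ne_j[of x i j] by simp
  qed
  moreover have "A = sf j i ` A'"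
  proof -
    have "sf j i ` A' = (\<lambda>x. sf j i (sf i j x)) ` A" using ij by (simp add: image_image)
    also have "\<dots> = A"
    proof -
      have "\<And>x. x \<in> A \<Longrightarrow> sf j i (sf i j x) = x" using ij(5) sf_back[of _ i j] by metis
      then show ?thesis by (simp cong: image_cong)
    qed
    finally show ?thesis by simp
  qed
  moreover have "even (j + i)" using ij by (simp add: add.commute)
  ultimately show ?thesis unfolding Rm_def using Rm_sub[OF assms] ij by blast
qed

lemma Rm_gen:
  assumes "n \<ge> 2" "\<gamma> \<in> generated n (GG n)" "dom \<gamma> = A0" "ran \<gamma> = A" "Rm n A A'"
  shows "\<exists>\<gamma>'\<in>generated n (GG n). dom \<gamma>' = A0 \<and> ran \<gamma>' = A'"
proof -
  obtain i j where ij: "A \<subseteq> {1..n}" "i \<in> {1..n}" "j \<in> {1..n}" "even (i + j)" "i \<notin> A" "A' = sf i j ` A"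
    using assms(5) unfolding Rm_def by blast
  define \<gamma>' where "\<gamma>' = pcomp \<gamma> (shm n i j)"
  have g: "\<gamma>' \<in> generated n (GG n)" unfolding \<gamma>'_def
    by (rule gen_comp[OF GG_AO[OF assms(1)] assms(2) shm_gen[OF assms(1) ij(2,3,4)]])
  have key: "\<And>x y. \<gamma> x = Some y \<Longrightarrow> \<gamma>' x = Some (sf i j y)"
  proof -
    fix x y assume "\<gamma> x = Some y"
    moreover have "y \<in> A" using \<open>\<gamma> x = Some y\<close> assms(4) unfolding ran_def by blast
    moreover have "y \<in> {1..n}" "y \<noteq> i" using \<open>y \<in> A\<close> ij(1,5) by auto
    ultimately show "\<gamma>' x = Some (sf i j y)" unfolding \<gamma>'_def pcomp_def shm_def map_comp_def by simp
  qed
  have none: "\<And>x. \<gamma> x = None \<Longrightarrow> \<gamma>' x = None" unfolding \<gamma>'_def pcomp_def map_comp_def by simp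
  have "dom \<gamma>' = dom \<gamma>"
  proof (intro set_eqI iffI)
    fix x assume "x \<in> dom \<gamma>'" then show "x \<in> dom \<gamma>" using none by (metis domIff)
  next
    fix x assume "x \<in> dom \<gamma>" then show "x \<in> dom \<gamma>'" using key by (metis domD domI)
  qed
  moreover have "ran \<gamma>' = sf i j ` ran \<gamma>"
  proof (intro set_eqI iffI)
    fix z assume "z \<in> ran \<gamma>'"
    then obtain x where x: "\<gamma>' x = Some z" unfolding ran_def by blast
    then obtain y where y: "\<gamma> x = Some y" using none by (cases "\<gamma> x") auto
    then have "z = sf i j y" using key x by simp
    moreover have "y \<in> ran \<gamma>" using y by (rule ranI)
    ultimately show "z \<in> sf i j ` ran \<gamma>" by blast
  next
    fix z assume "z \<in> sf i j ` ran \<gamma>"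
    then obtain x y where "\<gamma> x = Some y" "z = sf i j y" unfolding ran_def by blast
    then have "\<gamma>' x = Some z" using key by simp
    then show "z \<in> ran \<gamma>'" by (rule ranI)
  qed
  ultimately have "dom \<gamma>' = A0" "ran \<gamma>' = A'" using assms(3,4) ij(6) by simp_all
  then show ?thesis using g by blast
qed

lemma Rm_rt_sym: "(Rm n)\<^sup>*\<^sup>* A B \<Longrightarrow> (Rm n)\<^sup>*\<^sup>* B A"
proof (induction rule: rtranclp_induct)
  case base then show ?case by simp
next
  case (step y z)
  then show ?case using Rm_sym converse_rtranclp_into_rtranclp by metis
qed

lemma Rm_rt_gen:
  assumes "n \<ge> 2" "(Rm n)\<^sup>*\<^sup>* A B" "A \<subseteq> {1..n}"
  shows "\<exists>\<gamma>\<in>generated n (GG n). dom \<gamma> = A \<and> ran \<gamma> = B"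
  using assms(2)
proof (induction rule: rtranclp_induct)
  case base
  have "dom (idA A) = A" "ran (idA A) = A" unfolding idA_def dom_def ran_def by auto
  then show ?case using idA_gen[OF assms(1,3)] by blast
next
  case (step y z)
  then obtain \<gamma> where "\<gamma> \<in> generated n (GG n)" "dom \<gamma> = A" "ran \<gamma> = y" by blast
  then show ?case using Rm_gen[OF assms(1)] step(2) by blast
qed

lemma mv:
  assumes "A \<subseteq> {1..n}" "c \<notin> A" "1 \<le> c" "c < j" "j \<le> n" "even (c + j)" "b \<in> A" "c < b" "b \<le> j"
  shows "\<exists>A'. Rm n A A' \<and> sum id A' < sum id A"
proof (intro exI conjI)
  have "c \<in> {1..n}" "j \<in> {1..n}" using assms by auto
  then show "Rm n A (sf c j ` A)" unfolding Rm_def using assms(1,2,6) by blast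
  have fin: "finite A" using assms(1) finite_subset by blast
  have inj: "inj_on (sf c j) A" using assms(2) sf_inj[of _ c _ j] unfolding inj_on_def by metis
  have "sum id (sf c j ` A) = sum (sf c j) A" using sum.reindex[OF inj, of id] by simp
  also have "\<dots> < sum id A"
    by (rule sum_strict_mono_ex1[OF fin]) (use sf_le[OF assms(4)] sf_lt[OF assms(8,9)] assms(7) in auto)
  finally show "sum id (sf c j ` A) < sum id A" .
qed

lemma exists_gap:
  assumes "A \<subseteq> {1..n}" "A \<noteq> {1..card A}"
  shows "\<exists>a c. a \<in> A \<and> c \<notin> A \<and> 1 \<le> c \<and> c < a"
proof -
  have fin: "finite A" using assms(1) finite_subset by blast
  have "\<not> A \<subseteq> {1..card A}"
  proof
    assume "A \<subseteq> {1..card A}"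
    then have "A = {1..card A}" using card_subset_eq[of "{1..card A}" A] by simp
    then show False using assms(2) by simp
  qed
  then obtain a where a: "a \<in> A" "a \<notin> {1..card A}" by blast
  have a1: "a \<ge> 1" using a assms(1) by auto
  then have ak: "a > card A" using a by auto
  have "\<not> {1..a} \<subseteq> A"
  proof
    assume "{1..a} \<subseteq> A"
    then have "card {1..a} \<le> card A" using card_mono[OF fin] by blast
    then show False using ak by simp
  qed
  then obtain c where "c \<in> {1..a}" "c \<notin> A" by blast
  then show ?thesis using a(1) by (intro exI[of _ a] exI[of _ c]) (auto simp: order.order_iff_strict)
qed



lemma descent:
  assumes A: "A \<subseteq> {1..n}" and k: "card A + 2 \<le> n" and ne: "A \<noteq> {1..card A}"
  shows "\<exists>A'. Rm n A A' \<and> sum id A' < sum id A"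
proof -
  obtain a c where ac: "a \<in> A" "c \<notin> A" "1 \<le> c" "c < a" using exists_gap[OF A ne] by blast
  have an: "a \<le> n" using ac(1) A by auto
  show ?thesis
  proof (cases "even (c + a)")
    case True
    show ?thesis by (rule mv[OF A ac(2,3,4) an True ac(1,4)]) simp
  next
    case odd: False
    show ?thesis
    proof (cases "a < n")
      case True
      have ev: "even (c + (a + 1))" using odd by simp
      show ?thesis by (rule mv[OF A ac(2,3) _ _ ev ac(1)]) (use True ac in auto)
    next
      case False
      then have a_n: "a = n" using an by simp
      have fin: "finite A" using A finite_subset by blast
      have "card ({1..n} - A) = n - card A" using card_Diff_subset[OF fin A] by simp
      then have "card ({1..n} - A) \<ge> 2" using k by simp
      then have "card ({1..n} - A - {c}) \<ge> 1" by (auto simp: card_Diff_singleton_if)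
      then obtain d where d: "d \<in> {1..n}" "d \<notin> A" "d \<noteq> c"
        by (metis DiffE card_eq_0_iff ex_in_conv not_one_le_zero singletonI)
      have dn: "d < n" using d ac(1) a_n by (cases "d = n") auto
      show ?thesis
      proof (cases "even (d + n)")
        case True
        show ?thesis by (rule mv[OF A d(2) _ dn _ True ac(1)]) (use d a_n dn in auto)
      next
        case oddd: False
        define e where "e = min c d"
        have e: "e \<notin> A" "1 \<le> e" using ac d unfolding e_def by (auto simp: min_def)
        have oc: "odd (c + n)" using odd a_n by simp
        have cn: "c < n" using ac a_n by simp
        have e3: "e + 3 \<le> n" "odd (e + n)"
          using oc oddd cn dn d(3) unfolding e_def by (auto simp: min_def) presburger+
        show ?thesis
        proof (cases "e + 1 \<in> A")
          case True
          have ev: "even (e + (e + 2))" by simp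
          show ?thesis by (rule mv[OF A e _ _ ev True]) (use e3 in auto)
        next
          case False
          have ev: "even (e + 1 + n)" using e3 by simp
          show ?thesis by (rule mv[OF A False _ _ _ ev ac(1)]) (use e3 ac(1) a_n in auto)
        qed
      qed
    qed
  qed
qed



lemma Rm_card:
  assumes "Rm n A A'" shows "card A' = card A"
proof -
  obtain i j where ij: "i \<notin> A" "A' = sf i j ` A" using assms unfolding Rm_def by blast
  have "inj_on (sf i j) A" using ij(1) sf_inj[of _ i _ j] unfolding inj_on_def by metis
  then show ?thesis using ij(2) card_image by blast
qed

lemma to_canon:
  assumes "A \<subseteq> {1..n}" "card A + 2 \<le> n"
  shows "(Rm n)\<^sup>*\<^sup>* A {1..card A}"
  using assms
proof (induction "sum id A" arbitrary: A rule: less_induct)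
  case less
  show ?case
  proof (cases "A = {1..card A}")
    case True
    then show ?thesis by (metis rtranclp.rtrancl_refl)
  next
    case False
    obtain A' where A': "Rm n A A'" "sum id A' < sum id A" using descent[OF less.prems False] by blast
    have c: "card A' = card A" by (rule Rm_card[OF A'(1)])
    have "(Rm n)\<^sup>*\<^sup>* A' {1..card A'}"
      by (rule less.hyps[OF A'(2) Rm_sub[OF A'(1)]]) (use c less.prems in simp)
    then show ?thesis using A'(1) c converse_rtranclp_into_rtranclp by metis
  qed
qed

lemma reach:
  assumes "n \<ge> 2" "A \<subseteq> {1..n}" "B \<subseteq> {1..n}" "card A = card B" "card A + 2 \<le> n"
  shows "\<exists>\<gamma>\<in>generated n (GG n). dom \<gamma> = A \<and> ran \<gamma> = B"
proof -
  have "(Rm n)\<^sup>*\<^sup>* A {1..card A}" by (rule to_canon[OF assms(2,5)])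
  moreover have "(Rm n)\<^sup>*\<^sup>* B {1..card A}" using to_canon[OF assms(3)] assms(4,5) by simp
  then have "(Rm n)\<^sup>*\<^sup>* {1..card A} B" by (rule Rm_rt_sym)
  ultimately have "(Rm n)\<^sup>*\<^sup>* A B" by (rule rtranclp_trans)
  then show ?thesis by (rule Rm_rt_gen[OF assms(1) _ assms(2)])
qed

lemma card_ran:
  assumes "\<alpha> \<in> PI n" shows "card (ran \<alpha>) = card (dom \<alpha>)"
proof -
  have "ran \<alpha> = (\<lambda>x. the (\<alpha> x)) ` dom \<alpha>"
  proof (intro set_eqI iffI)
    fix y assume "y \<in> ran \<alpha>"
    then obtain x where "\<alpha> x = Some y" unfolding ran_def by blast
    then show "y \<in> (\<lambda>x. the (\<alpha> x)) ` dom \<alpha>" by (intro image_eqI[of _ _ x]) auto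
  next
    fix y assume "y \<in> (\<lambda>x. the (\<alpha> x)) ` dom \<alpha>"
    then obtain x where "x \<in> dom \<alpha>" "y = the (\<alpha> x)" by blast
    then have "\<alpha> x = Some y" by auto
    then show "y \<in> ran \<alpha>" by (rule ranI)
  qed
  moreover have "inj_on (\<lambda>x. the (\<alpha> x)) (dom \<alpha>)"
  proof (rule inj_onI)
    fix x y assume "x \<in> dom \<alpha>" "y \<in> dom \<alpha>" "the (\<alpha> x) = the (\<alpha> y)"
    then have "\<alpha> x = \<alpha> y" by auto
    then show "x = y" using assms \<open>x \<in> dom \<alpha>\<close> \<open>y \<in> dom \<alpha>\<close> unfolding PI_def inj_on_def by blast
  qed
  ultimately show ?thesis using card_image by metis
qed

lemma card_n1:
  assumes "A \<subseteq> {1..n}" "card A + 1 = n"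
  shows "\<exists>i\<in>{1..n}. A = Xs n i"
proof -
  have fin: "finite A" using assms(1) finite_subset by blast
  have "card ({1..n} - A) = 1" using card_Diff_subset[OF fin assms(1)] assms(2) by simp
  then obtain i where i: "{1..n} - A = {i}" using card_1_singletonE by blast
  then have "i \<in> {1..n}" by blast
  moreover have "A = Xs n i" unfolding Xs_def using i assms(1) by blast
  ultimately show ?thesis by blast
qed

lemma ext_outside: "i \<in> {1..n} \<Longrightarrow> j \<in> {1..n} \<Longrightarrow> x \<notin> {1..n} \<Longrightarrow> ext i j x = x"
  unfolding ext_def sf_def by auto

theorem proposition4p7:
  fixes n :: nat
  assumes "n \<ge> 2"
  shows "generated n {xgen n i | i. i \<in> {1..n}} = AO n"
proof
  show "generated n {xgen n i | i. i \<in> {1..n}} \<subseteq> AO n" by (rule gen_AO[OF GG_AO[OF assms]])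
next
  show "AO n \<subseteq> generated n {xgen n i | i. i \<in> {1..n}}"
  proof
    fix \<alpha> assume a: "\<alpha> \<in> AO n"
    have POI: "\<alpha> \<in> POI n" using a unfolding AO_def by blast
    then have PI: "\<alpha> \<in> PI n" unfolding POI_def by blast
    define A where "A = dom \<alpha>"
    define B where "B = ran \<alpha>"
    have A: "A \<subseteq> {1..n}" using PI unfolding PI_def A_def by blast
    have B: "B \<subseteq> {1..n}" using PI unfolding PI_def B_def by blast
    have cAB: "card B = card A" using card_ran[OF PI] unfolding A_def B_def .
    have "card A \<le> card {1..n}" by (rule card_mono) (use A in auto)
    then have cAn: "card A \<le> n" by simp
    have uniq: "\<alpha> = \<gamma>" if g: "\<gamma> \<in> POI n" "dom \<gamma> = A" "ran \<gamma> = B" for \<gamma>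
    proof (rule POI_unique[OF POI g(1)])
      show "dom \<alpha> = dom \<gamma>" using g(2) unfolding A_def by simp
      show "ran \<alpha> = ran \<gamma>" using g(3) unfolding B_def by simp
    qed
    have genPOI: "\<gamma> \<in> POI n" if "\<gamma> \<in> generated n (GG n)" for \<gamma>
      using gen_AO[OF GG_AO[OF assms]] that unfolding AO_def by blast
    consider "card A + 2 \<le> n" | "card A = n" | "card A + 1 = n" using cAn by linarith
    then show "\<alpha> \<in> generated n (GG n)"
    proof cases
      case 1
      obtain \<gamma> where g: "\<gamma> \<in> generated n (GG n)" "dom \<gamma> = A" "ran \<gamma> = B"
        using reach[OF assms A B cAB[symmetric] 1] by blast
      have "\<alpha> = \<gamma>" by (rule uniq[OF genPOI[OF g(1)] g(2,3)])
      then show ?thesis using g(1) by simp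
    next
      case 2
      have An: "A = {1..n}" using card_subset_eq[OF _ A] 2 by simp
      have Bn: "B = {1..n}" using card_subset_eq[OF _ B] 2 cAB by simp
      have "pid n \<in> POI n" using pid_AO unfolding AO_def by blast
      moreover have "dom (pid n) = A" unfolding An pid_def dom_def by (simp add: atLeastAtMost_def atLeast_def atMost_def Collect_conj_eq)
      moreover have "ran (pid n) = B"
      proof (intro set_eqI iffI)
        fix y assume "y \<in> ran (pid n)"
        then obtain x where "pid n x = Some y" unfolding ran_def by blast
        then show "y \<in> B" unfolding Bn pid_def by (simp split: if_splits)
      next
        fix y assume "y \<in> B"
        then have "pid n y = Some y" unfolding Bn pid_def by simp
        then show "y \<in> ran (pid n)" by (rule ranI)
      qed
      ultimately have "\<alpha> = pid n" by (rule uniq)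
      then show ?thesis using generated.gen_id by simp
    next
      case 3
      obtain i where i: "i \<in> {1..n}" "A = Xs n i" using card_n1[OF A 3] by blast
      have "card B + 1 = n" using 3 cAB by simp
      then obtain j where j: "j \<in> {1..n}" "B = Xs n j" using card_n1[OF B] by blast
      have aij: "\<alpha> = shm n i j"
      proof (rule uniq[OF shm_POI[OF i(1) j(1)]])
        show "dom (shm n i j) = A" using dom_shm[of n i j] i(2) by simp
        show "ran (shm n i j) = B" using ran_shm[OF i(1) j(1)] j(2) by simp
      qed
      obtain \<sigma> where s: "\<sigma> permutes {1..n}" "evenperm \<sigma>" "\<forall>x\<in>dom \<alpha>. \<alpha> x = Some (\<sigma> x)"
        using a unfolding AO_def AI_def by auto
      have sx: "\<And>x. x \<in> Xs n i \<Longrightarrow> \<sigma> x = sf i j x"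
      proof -
        fix x assume x: "x \<in> Xs n i"
        then have "x \<in> dom \<alpha>" using i unfolding A_def by simp
        then have "\<alpha> x = Some (\<sigma> x)" using s(3) by blast
        moreover have "\<alpha> x = Some (sf i j x)" using x unfolding aij shm_def Xs_def by simp
        ultimately show "\<sigma> x = sf i j x" by simp
      qed
      have si: "\<sigma> i = j"
      proof (rule ccontr)
        assume ne: "\<sigma> i \<noteq> j"
        have "\<sigma> i \<in> {1..n}" using permutes_in_image[OF s(1)] i(1) by blast
        then have "\<sigma> i \<in> ran \<alpha>" using ne j unfolding B_def Xs_def by blast
        then obtain y where y: "\<alpha> y = Some (\<sigma> i)" unfolding ran_def by blast
        then have yd: "y \<in> dom \<alpha>" by blast
        then have "\<alpha> y = Some (\<sigma> y)" using s(3) by blast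
        then have "\<sigma> y = \<sigma> i" using y by simp
        then have "y = i" using permutes_inj[OF s(1)] unfolding inj_def by blast
        then show False using yd i unfolding A_def Xs_def by simp
      qed
      have "\<sigma> = ext i j"
      proof
        fix x
        show "\<sigma> x = ext i j x"
        proof (cases "x \<in> {1..n}")
          case False
          then show ?thesis using permutes_not_in[OF s(1) False] ext_outside[OF i(1) j(1) False] by simp
        next
          case True
          show ?thesis
          proof (cases "x = i")
            case True then show ?thesis using si unfolding ext_def by simp
          next
            case False
            then have "x \<in> Xs n i" using \<open>x \<in> {1..n}\<close> unfolding Xs_def by simp
            then show ?thesis using sx False unfolding ext_def by simp
          qed
        qed
      qed
      then have "even (i + j)" using s(2) ext_perm by blast
      then show ?thesis unfolding aij by (rule shm_gen[OF assms i(1) j(1)])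
    qed
  qed
qed

end
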